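(* Let $\mathcal L$ be a cabled linkage in $\mathbb R^n$ and $W\subset\mathcal V(\mathcal L)$. If $\mathcal{SC}(\mathcal L,W)$ is compact and nonempty, then for each vertex in $W$ there is a path in $L$ from it to a fixed vertex.
   Context: A cabled linkage in $\mathbb R^n$ is $\mathcal L=(L,\ell,V,\mu,F)$: $L$ a finite one-dimensional simplicial complex (vertex set $\mathcal V(L)=\mathcal V(\mathcal L)$, edge set $\mathcal E(L)$), $\ell\colon\mathcal E(L)\to(0,\infty)$, $V\subset\mathcal V(L)$ the set of fixed vertices, $\mu\colon V\to\mathbb R^n$, $F\subset\mathcal E(L)$ flexible edges. $\mathcal C(\mathcal L)=\{\varphi\colon\mathcal V(L)\to\mathbb R^n\mid\varphi(v)=\mu(v)\ (v\in V),\ |\varphi(v)-\varphi(w)|\le\ell(vw)\ (vw\in F),\ |\varphi(v)-\varphi(w)|=\ell(vw)\ (vw\in\mathcal E(L)\setminus F)\}$ and $\mathcal{SC}(\mathcal L,W)=\{\varphi|_W\mid\varphi\in\mathcal C(\mathcal L)\}\subset(\mathbb R^n)^W$. *)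

theory Defs
  imports "HOL-Analysis.Analysis"
begin

definition simplicial_graph :: "'v set \<Rightarrow> 'v set set \<Rightarrow> bool" where
  "simplicial_graph VL EL \<longleftrightarrow> finite VL \<and>
     (\<forall>e\<in>EL. \<exists>a b. a \<in> VL \<and> b \<in> VL \<and> a \<noteq> b \<and> e = {a, b})"

definition cabled_linkage ::
  "'v set \<Rightarrow> 'v set set \<Rightarrow> ('v set \<Rightarrow> real) \<Rightarrow> 'v set \<Rightarrow> ('v \<Rightarrow> real^'n) \<Rightarrow> 'v set set \<Rightarrow> bool" where
  "cabled_linkage VL EL l V \<mu> F \<longleftrightarrow> simplicial_graph VL EL \<and>
     (\<forall>e\<in>EL. l e > 0) \<and> V \<subseteq> VL \<and> F \<subseteq> EL"

definition config_space ::
  "'v set \<Rightarrow> 'v set set \<Rightarrow> ('v set \<Rightarrow> real) \<Rightarrow> 'v set \<Rightarrow> ('v \<Rightarrow> real^'n) \<Rightarrow> 'v set set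
   \<Rightarrow> ('v \<Rightarrow> real^'n) set" where
  "config_space VL EL l V \<mu> F = {\<phi> \<in> extensional VL.
     (\<forall>v\<in>V. \<phi> v = \<mu> v) \<and>
     (\<forall>v\<in>VL. \<forall>w\<in>VL. {v, w} \<in> F \<longrightarrow> dist (\<phi> v) (\<phi> w) \<le> l {v, w}) \<and>
     (\<forall>v\<in>VL. \<forall>w\<in>VL. {v, w} \<in> EL - F \<longrightarrow> dist (\<phi> v) (\<phi> w) = l {v, w})}"

definition sub_config_space ::
  "'v set \<Rightarrow> 'v set set \<Rightarrow> ('v set \<Rightarrow> real) \<Rightarrow> 'v set \<Rightarrow> ('v \<Rightarrow> real^'n) \<Rightarrow> 'v set set
   \<Rightarrow> 'v set \<Rightarrow> ('v \<Rightarrow> real^'n) set" where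
  "sub_config_space VL EL l V \<mu> F W = (\<lambda>\<phi>. restrict \<phi> W) ` config_space VL EL l V \<mu> F"

definition adj :: "'v set set \<Rightarrow> ('v \<times> 'v) set" where
  "adj EL = {(a, b). {a, b} \<in> EL}"

end

theory Submission
  imports Defs
begin

theorem lemma3p9:
  fixes VL :: "'v set" and EL :: "'v set set" and l :: "'v set \<Rightarrow> real"
    and V :: "'v set" and \<mu> :: "'v \<Rightarrow> real^'n" and F :: "'v set set" and W :: "'v set"
  assumes "cabled_linkage VL EL l V \<mu> F"
    and "W \<subseteq> VL"
    and "compactin (product_topology (\<lambda>_. euclidean) W) (sub_config_space VL EL l V \<mu> F W)"
    and "sub_config_space VL EL l V \<mu> F W \<noteq> {}"
  shows "\<forall>w\<in>W. \<exists>v\<in>V. (w, v) \<in> (adj EL)\<^sup>*"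
proof (rule ccontr)
  assume "\<not> ?thesis"
  then obtain w0 where w0: "w0 \<in> W" and nc: "\<And>v. v \<in> V \<Longrightarrow> (w0, v) \<notin> (adj EL)\<^sup>*" by blast
  define S where "S = sub_config_space VL EL l V \<mu> F W"
  have "compactin euclidean ((\<lambda>f. f w0) ` S)"
    using image_compactin[OF assms(3)[folded S_def] continuous_map_product_projection[OF w0, of "\<lambda>_. euclidean"]]
    by simp
  hence "bounded ((\<lambda>f. f w0) ` S)" using compact_imp_bounded compactin_euclidean_iff by blast
  then obtain B where B: "\<And>x. x \<in> (\<lambda>f. f w0) ` S \<Longrightarrow> norm x \<le> B" by (meson bounded_iff)
  obtain \<phi> where \<phi>: "\<phi> \<in> config_space VL EL l V \<mu> F"
    using assms(4) unfolding sub_config_space_def by blast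
  define C where "C = {u. (w0, u) \<in> (adj EL)\<^sup>*}"
  have CV: "C \<inter> V = {}" using nc C_def by blast
  have Cclosed: "a \<in> C \<longleftrightarrow> b \<in> C" if "{a, b} \<in> EL" for a b
  proof -
    have "(a, b) \<in> adj EL" "(b, a) \<in> adj EL" using that by (auto simp: adj_def insert_commute)
    thus ?thesis unfolding C_def by (auto intro: rtrancl.rtrancl_into_rtrancl)
  qed
  define t :: "real^'n" where "t = (B + norm (\<phi> w0) + 1) *\<^sub>R axis undefined 1"
  define \<psi> where "\<psi> = (\<lambda>u. if u \<in> VL \<and> u \<in> C then \<phi> u + t else \<phi> u)"
  have "\<psi> \<in> config_space VL EL l V \<mu> F"
  proof -
    have ext: "\<psi> \<in> extensional VL" using \<phi> unfolding config_space_def \<psi>_def extensional_def by auto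
    have fixv: "\<forall>v\<in>V. \<psi> v = \<mu> v" using \<phi> CV unfolding config_space_def \<psi>_def by auto
    have dd: "dist (\<psi> a) (\<psi> b) = dist (\<phi> a) (\<phi> b)" if "a \<in> VL" "b \<in> VL" "{a,b} \<in> EL" for a b
    proof (cases "a \<in> C")
      case True
      then have "b \<in> C" using Cclosed[OF that(3)] by blast
      then show ?thesis using True that by (simp add: \<psi>_def dist_norm)
    next
      case False
      then have "b \<notin> C" using Cclosed[OF that(3)] by blast
      then show ?thesis using False that by (simp add: \<psi>_def)
    qed
    have "F \<subseteq> EL" using assms(1) unfolding cabled_linkage_def by blast
    then show ?thesis using \<phi> ext fixv dd unfolding config_space_def by auto
  qed
  hence "restrict \<psi> W \<in> S" unfolding S_def sub_config_space_def by blast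
  hence "norm (\<psi> w0) \<le> B" using B w0 by force
  moreover have "\<psi> w0 = \<phi> w0 + t" using w0 assms(2) by (auto simp: \<psi>_def C_def)
  moreover have "norm t = B + norm (\<phi> w0) + 1"
  proof -
    have "B \<ge> 0" using B \<open>restrict \<psi> W \<in> S\<close> by (meson image_eqI norm_ge_zero order_trans)
    thus ?thesis by (simp add: t_def)
  qed
  moreover have "norm t \<le> norm (\<phi> w0 + t) + norm (\<phi> w0)"
    using norm_triangle_ineq4[of "\<phi> w0 + t" "\<phi> w0"] by simp
  ultimately show False by (smt (verit))
qed

end
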